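(* Let $(\mathcal Q,d)$ be a Hadamard space, $Y$ a $\mathcal Q$-valued random variable, $o\in\mathcal Q$, and $\tau\in\mathcal S_0^+$ with $\mathbb E[\tau'(d(Y,o))]<\infty$. Then: (i) the variance functional $v:\mathcal Q\to\mathbb R$, $v(q):=\mathbb E[\tau(d(Y,q))-\tau(d(Y,o))]$, is (well-defined and) convex; (ii) the set $M:=\arg\min_{q\in\mathcal Q}v(q)$ of $\tau$-Fréchet means is nonempty, closed, bounded and convex, and does not depend on the choice of $o$; (iii) if $\mathcal Y\subset\mathcal Q$ is closed and convex with $\mathbb P(Y\in\mathcal Y)=1$, then $M\subset\mathcal Y$.
   Context: A Hadamard space is a complete metric space $(\mathcal Q,d)$ such that for all $y_0,y_1$ there is $m$ with $\frac12 d(y_0,q)^2+\frac12 d(y_1,q)^2-\frac14 d(y_0,y_1)^2\ge d(q,m)^2$ for all $q$; in it any $q\ne p$ are joined by a unique unit-speed geodesic $\gamma_{q\to p}:[0,d(q,p)]\to\mathcal Q$. A set $A\subset\mathcal Q$ is convex if $\gamma_{q\to p}$ has image in $A$ for all $q\ne p$ in $A$; a function $f:\mathcal Q\to\mathbb R$ is convex if $f\circ\gamma_{q\to p}$ is convex for all $q\ne p$. $\mathcal S_0^+$ is the set of nondecreasing convex $\tau:[0,\infty)\to\mathbb R$, differentiable on $(0,\infty)$ with concave derivative $\tau'$ (with $\tau'(0):=\lim_{x\searrow0}\tau'(x)$), such that $\tau(0)=0$ and $\tau'(x)>0$ for $x>0$. *)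

theory Defs
  imports "HOL-Analysis.Analysis" "HOL-Probability.Probability"
begin

definition hadamard :: "'q::complete_space itself \<Rightarrow> bool" where
  "hadamard _ \<longleftrightarrow> (\<forall>y0 y1::'q. \<exists>m. \<forall>q.
     (1/2) * (dist y0 q)\<^sup>2 + (1/2) * (dist y1 q)\<^sup>2 - (1/4) * (dist y0 y1)\<^sup>2 \<ge> (dist q m)\<^sup>2)"

definition geodesic_between :: "'q::metric_space \<Rightarrow> 'q \<Rightarrow> (real \<Rightarrow> 'q) \<Rightarrow> bool" where
  "geodesic_between q p \<gamma> \<longleftrightarrow> \<gamma> 0 = q \<and> \<gamma> (dist q p) = p \<and>
     (\<forall>s\<in>{0..dist q p}. \<forall>t\<in>{0..dist q p}. dist (\<gamma> s) (\<gamma> t) = \<bar>s - t\<bar>)"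

definition geod_convex_set :: "'q::metric_space set \<Rightarrow> bool" where
  "geod_convex_set A \<longleftrightarrow> (\<forall>q\<in>A. \<forall>p\<in>A. q \<noteq> p \<longrightarrow>
     (\<forall>\<gamma>. geodesic_between q p \<gamma> \<longrightarrow> \<gamma> ` {0..dist q p} \<subseteq> A))"

definition geod_convex_fun :: "('q::metric_space \<Rightarrow> real) \<Rightarrow> bool" where
  "geod_convex_fun f \<longleftrightarrow> (\<forall>q p. q \<noteq> p \<longrightarrow>
     (\<forall>\<gamma>. geodesic_between q p \<gamma> \<longrightarrow> convex_on {0..dist q p} (f \<circ> \<gamma>)))"

definition tau_deriv :: "(real \<Rightarrow> real) \<Rightarrow> real \<Rightarrow> real" where
  "tau_deriv \<tau> x = (if x = 0 then Lim (at_right 0) (deriv \<tau>) else deriv \<tau> x)"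

definition S0plus :: "(real \<Rightarrow> real) set" where
  "S0plus = {\<tau>. mono_on {0..} \<tau> \<and> convex_on {0..} \<tau> \<and>
     (\<forall>x>0. \<tau> differentiable (at x)) \<and> concave_on {0<..} (deriv \<tau>) \<and>
     \<tau> 0 = 0 \<and> (\<forall>x>0. deriv \<tau> x > 0)}"

definition var_fun :: "'w measure \<Rightarrow> ('w \<Rightarrow> 'q::metric_space) \<Rightarrow> (real \<Rightarrow> real) \<Rightarrow> 'q \<Rightarrow> 'q \<Rightarrow> real" where
  "var_fun P Y \<tau> x0 q = (\<integral>\<omega>. \<tau> (dist (Y \<omega>) q) - \<tau> (dist (Y \<omega>) x0) \<partial>P)"

definition frechet_means :: "'w measure \<Rightarrow> ('w \<Rightarrow> 'q::metric_space) \<Rightarrow> (real \<Rightarrow> real) \<Rightarrow> 'q \<Rightarrow> 'q set" where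
  "frechet_means P Y \<tau> x0 = {q. \<forall>q'. var_fun P Y \<tau> x0 q \<le> var_fun P Y \<tau> x0 q'}"

end

theory Submission
  imports Defs
begin


definition h2 :: "(real \<Rightarrow> real) \<Rightarrow> real \<Rightarrow> real" where
  "h2 \<tau> x = (if x \<le> 0 then 0 else deriv \<tau> x)"

context
  fixes \<tau> :: "real \<Rightarrow> real"
  assumes tau: "\<tau> \<in> S0plus"
begin

lemma tau_mono: "0 \<le> a \<Longrightarrow> a \<le> b \<Longrightarrow> \<tau> a \<le> \<tau> b"
  using tau unfolding S0plus_def mono_on_def by auto

lemma tau_convex: "convex_on {0..} \<tau>"
  using tau unfolding S0plus_def by auto

lemma tau0: "\<tau> 0 = 0" using tau unfolding S0plus_def by auto

lemma tau_dpos: "x > 0 \<Longrightarrow> deriv \<tau> x > 0" using tau unfolding S0plus_def by auto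

lemma tau_concave: "concave_on {0<..} (deriv \<tau>)" using tau unfolding S0plus_def by auto

lemma tau_DERIV: "x > 0 \<Longrightarrow> (\<tau> has_real_derivative deriv \<tau> x) (at x)"
  using tau unfolding S0plus_def by (auto simp: DERIV_deriv_iff_real_differentiable)

lemma tau_tangent:
  assumes "c > 0" "x \<ge> 0"
  shows "\<tau> x - \<tau> c \<ge> deriv \<tau> c * (x - c)"
proof (rule convex_on_imp_above_tangent[OF tau_convex])
  show "connected {0::real..}" by (simp add: is_interval_connected)
  show "c \<in> interior {0..}" using assms by simp
  show "x \<in> {0..}" using assms by simp
  show "(\<tau> has_real_derivative deriv \<tau> c) (at c within {0..})"
    using tau_DERIV[OF assms(1)] by (rule has_field_derivative_at_within)
qed

lemma h2_nonneg: "h2 \<tau> x \<ge> 0"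
  unfolding h2_def using tau_dpos by (auto simp: less_imp_le)

lemma deriv_mono: assumes "0 < a" "a \<le> b" shows "deriv \<tau> a \<le> deriv \<tau> b"
proof -
  have 1: "\<tau> b - \<tau> a \<ge> deriv \<tau> a * (b - a)" using tau_tangent assms by auto
  have 2: "\<tau> a - \<tau> b \<ge> deriv \<tau> b * (a - b)" using tau_tangent assms by auto
  show ?thesis
  proof (cases "a = b")
    case False
    then have "b - a > 0" using assms by auto
    from 1 2 have "deriv \<tau> a * (b - a) \<le> deriv \<tau> b * (b - a)" by (simp add: algebra_simps)
    then show ?thesis using \<open>b - a > 0\<close> by simp
  qed simp
qed

lemma h2_mono: "a \<le> b \<Longrightarrow> h2 \<tau> a \<le> h2 \<tau> b"
  unfolding h2_def using deriv_mono tau_dpos by (auto simp: less_imp_le)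

lemma h2_mono': "mono (h2 \<tau>)"
  by (auto simp: mono_def h2_mono)

lemma tau_lip:
  assumes "0 \<le> b" "b \<le> a"
  shows "\<tau> a - \<tau> b \<le> h2 \<tau> a * (a - b)" "0 \<le> \<tau> a - \<tau> b"
proof -
  show "0 \<le> \<tau> a - \<tau> b" using tau_mono assms by auto
  show "\<tau> a - \<tau> b \<le> h2 \<tau> a * (a - b)"
  proof (cases "a = 0")
    case True then show ?thesis using assms by auto
  next
    case False
    then have "a > 0" using assms by auto
    have "\<tau> b - \<tau> a \<ge> deriv \<tau> a * (b - a)" using tau_tangent \<open>a > 0\<close> assms by auto
    then show ?thesis using \<open>a > 0\<close> unfolding h2_def by (auto simp: algebra_simps)
  qed
qed

lemma tau_lip_abs:
  assumes "0 \<le> a" "0 \<le> b"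
  shows "\<bar>\<tau> a - \<tau> b\<bar> \<le> h2 \<tau> (max a b) * \<bar>a - b\<bar>"
proof (cases "b \<le> a")
  case True then show ?thesis using tau_lip[of b a] assms by (auto simp: max_def)
next
  case False then show ?thesis using tau_lip[of a b] assms by (auto simp: max_def)
qed

lemma deriv_double: assumes "t > 0" shows "deriv \<tau> (2 * t) \<le> 3 * deriv \<tau> t"
proof -
  have "(1 - 1/3) * deriv \<tau> (t/2) + (1/3) * deriv \<tau> (2*t) \<le> deriv \<tau> ((1 - 1/3) *\<^sub>R (t/2) + (1/3) *\<^sub>R (2*t))"
    by (rule concave_onD[OF tau_concave]) (use assms in auto)
  also have "(1 - 1/3) *\<^sub>R (t/2) + (1/3) *\<^sub>R (2*t) = t" by simp
  finally show ?thesis using tau_dpos[of "t/2"] assms by simp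
qed

lemma h2_add: assumes "0 \<le> x" "0 \<le> R" shows "h2 \<tau> (x + R) \<le> 3 * (h2 \<tau> x + h2 \<tau> R)"
proof (cases "x + R \<le> 0")
  case True then show ?thesis using h2_nonneg[of x] h2_nonneg[of R] by (simp add: h2_def)
next
  case False
  define m where "m = max x R"
  have m: "m > 0" using False assms unfolding m_def by auto
  have "h2 \<tau> (x + R) \<le> h2 \<tau> (2 * m)" by (rule h2_mono) (auto simp: m_def)
  also have "\<dots> = deriv \<tau> (2*m)" using m by (simp add: h2_def)
  also have "\<dots> \<le> 3 * deriv \<tau> m" by (rule deriv_double[OF m])
  also have "\<dots> = 3 * h2 \<tau> m" using m by (simp add: h2_def)
  also have "h2 \<tau> m \<le> h2 \<tau> x + h2 \<tau> R" using h2_nonneg[of x] h2_nonneg[of R] by (auto simp: m_def max_def)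
  finally show ?thesis by simp
qed

lemma tau_strict: assumes "0 \<le> a" "a < b" shows "\<tau> a < \<tau> b"
proof -
  have "\<tau> b - \<tau> ((a+b)/2) \<ge> deriv \<tau> ((a+b)/2) * (b - (a+b)/2)"
    using tau_tangent[of "(a+b)/2" b] assms by auto
  moreover have "deriv \<tau> ((a+b)/2) * (b - (a+b)/2) > 0" using tau_dpos[of "(a+b)/2"] assms by auto
  moreover have "\<tau> a \<le> \<tau> ((a+b)/2)" using tau_mono assms by auto
  ultimately show ?thesis by linarith
qed

lemma tau_mid: assumes "0 \<le> s" "0 \<le> t" "0 \<le> r" "r \<le> (s+t)/2" shows "\<tau> r \<le> (\<tau> s + \<tau> t)/2"
proof -
  have "\<tau> r \<le> \<tau> ((s+t)/2)" using tau_mono assms by auto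
  also have "\<tau> ((1 - 1/2) *\<^sub>R s + (1/2) *\<^sub>R t) \<le> (1 - 1/2) * \<tau> s + (1/2) * \<tau> t"
    by (rule convex_onD[OF tau_convex]) (use assms in auto)
  then have "\<tau> ((s+t)/2) \<le> (\<tau> s + \<tau> t)/2" by (simp add: field_simps)
  finally show ?thesis .
qed

lemma tau_linear_lower: assumes "x \<ge> 0" shows "\<tau> x \<ge> deriv \<tau> 1 * (x - 1)"
proof -
  have "\<tau> x - \<tau> 1 \<ge> deriv \<tau> 1 * (x - 1)" using tau_tangent assms by auto
  moreover have "\<tau> 1 \<ge> 0" using tau_mono[of 0 1] tau0 by simp
  ultimately show ?thesis by linarith
qed

lemma tau_meas: "(\<lambda>x. \<tau> (max x 0)) \<in> borel_measurable borel"
  by (rule borel_measurable_mono) (auto simp: mono_def intro!: tau_mono)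

lemma h2_le_tau_deriv: "x \<ge> 0 \<Longrightarrow> ennreal (h2 \<tau> x) \<le> ennreal (tau_deriv \<tau> x)"
  unfolding h2_def tau_deriv_def by auto

end



lemma had_mid:
  assumes "hadamard TYPE('q::complete_space)"
  shows "\<exists>m::'q. dist a m = dist a b / 2 \<and> dist b m = dist a b / 2 \<and>
    (\<forall>q. (dist q m)\<^sup>2 \<le> (1/2) * (dist a q)\<^sup>2 + (1/2) * (dist b q)\<^sup>2 - (1/4) * (dist a b)\<^sup>2)"
proof -
  obtain m :: 'q where m: "\<And>q. (1/2) * (dist a q)\<^sup>2 + (1/2) * (dist b q)\<^sup>2 - (1/4) * (dist a b)\<^sup>2 \<ge> (dist q m)\<^sup>2"
    using assms unfolding hadamard_def by blast
  have "(dist a m)\<^sup>2 \<le> ((dist a b)/2)\<^sup>2" using m[of a] by (simp add: dist_commute power2_eq_square field_simps)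
  then have 1: "dist a m \<le> dist a b / 2" by (rule power2_le_imp_le) simp
  have "(dist b m)\<^sup>2 \<le> ((dist a b)/2)\<^sup>2" using m[of b] by (simp add: dist_commute power2_eq_square field_simps)
  then have 2: "dist b m \<le> dist a b / 2" by (rule power2_le_imp_le) simp
  have "dist a b \<le> dist a m + dist b m" by (metis dist_commute dist_triangle)
  with 1 2 have "dist a m = dist a b / 2" "dist b m = dist a b / 2" by linarith+
  with m show ?thesis by blast
qed

lemma mid_ineq:
  assumes "hadamard TYPE('q::complete_space)"
    and "dist a c = dist a b / 2" "dist b c = dist a b / 2"
  shows "(dist (q::'q) c)\<^sup>2 \<le> (1/2) * (dist a q)\<^sup>2 + (1/2) * (dist b q)\<^sup>2 - (1/4) * (dist a b)\<^sup>2"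
proof -
  obtain m :: 'q where m: "\<And>q. (dist q m)\<^sup>2 \<le> (1/2) * (dist a q)\<^sup>2 + (1/2) * (dist b q)\<^sup>2 - (1/4) * (dist a b)\<^sup>2"
    using had_mid[OF assms(1)] by blast
  have "(dist c m)\<^sup>2 \<le> 0" using m[of c] assms(2,3) by (simp add: power2_eq_square field_simps)
  then have "c = m" by simp
  then show ?thesis using m by simp
qed

lemma mid_dist:
  assumes "hadamard TYPE('q::complete_space)"
    and "dist a c = dist a b / 2" "dist b c = dist a b / 2"
  shows "dist (y::'q) c \<le> (dist y a + dist y b) / 2"
proof -
  define \<alpha> where "\<alpha> = dist a y"
  define \<beta> where "\<beta> = dist b y"
  define D where "D = dist a b"
  have ab: "\<bar>\<alpha> - \<beta>\<bar> \<le> D" unfolding \<alpha>_def \<beta>_def D_def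
    by (smt (verit) dist_commute dist_triangle)
  have "(\<alpha> - \<beta>)\<^sup>2 \<le> D\<^sup>2"
    by (metis ab abs_ge_zero order_trans power2_abs power_mono)
  moreover have "(dist y c)\<^sup>2 \<le> (1/2) * \<alpha>\<^sup>2 + (1/2) * \<beta>\<^sup>2 - (1/4) * D\<^sup>2"
    using mid_ineq[OF assms] unfolding \<alpha>_def \<beta>_def D_def .
  ultimately have "(dist y c)\<^sup>2 \<le> ((\<alpha> + \<beta>)/2)\<^sup>2"
    by (simp add: power2_eq_square field_simps)
  then have "dist y c \<le> (\<alpha> + \<beta>)/2" by (rule power2_le_imp_le) (simp add: \<alpha>_def \<beta>_def)
  then show ?thesis by (simp add: \<alpha>_def \<beta>_def dist_commute)
qed

lemma between:
  assumes had: "hadamard TYPE('q::complete_space)"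
    and z: "dist a (z::'q) = t" "dist z b = dist a b - t"
    and w: "dist a w = s" "dist w b = dist a b - s"
    and st: "s \<le> t"
  shows "dist z w = t - s \<and> (\<exists>m. dist a m = (s+t)/2 \<and> dist m b = dist a b - (s+t)/2)"
proof -
  define D where "D = dist a b"
  define e where "e = dist z w"
  have e1: "e \<ge> t - s" unfolding e_def using z w
    by (smt (verit) dist_commute dist_triangle)
  obtain m where m1: "dist z m = e/2" and m2: "dist w m = e/2"
    and m: "\<And>q. (dist q m)\<^sup>2 \<le> (1/2) * (dist z q)\<^sup>2 + (1/2) * (dist w q)\<^sup>2 - (1/4) * e\<^sup>2"
    using had_mid[OF had, of z w] unfolding e_def by blast
  define x where "x = dist a m"
  define y where "y = dist m b"
  have hx: "x\<^sup>2 \<le> (1/2) * t\<^sup>2 + (1/2) * s\<^sup>2 - (1/4) * e\<^sup>2"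
    using m[of a] z w by (simp add: x_def dist_commute)
  have hy: "y\<^sup>2 \<le> (1/2) * (D - t)\<^sup>2 + (1/2) * (D - s)\<^sup>2 - (1/4) * e\<^sup>2"
    using m[of b] z w by (simp add: y_def D_def dist_commute)
  have xy: "D \<le> x + y" unfolding D_def x_def y_def by (rule dist_triangle)
  have t0: "0 \<le> t" "t \<le> D" "0 \<le> s" "s \<le> D" using z w zero_le_dist[of z b] zero_le_dist[of w b]
      zero_le_dist[of a z] zero_le_dist[of a w] by (auto simp: D_def)
  have x0: "x \<ge> 0" "y \<ge> 0" by (auto simp: x_def y_def)
  have id1: "(1/2) * t\<^sup>2 + (1/2) * s\<^sup>2 - (1/4) * (t - s)\<^sup>2 = ((t+s)/2)\<^sup>2"
    by (simp add: power2_eq_square field_simps)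
  have id2: "(1/2) * (D - t)\<^sup>2 + (1/2) * (D - s)\<^sup>2 - (1/4) * (t - s)\<^sup>2 = (D - (t+s)/2)\<^sup>2"
    by (simp add: power2_eq_square field_simps)
  have ee: "e = t - s"
  proof (rule ccontr)
    assume "e \<noteq> t - s"
    then have "e > t - s" using e1 by simp
    then have "(t - s)\<^sup>2 < e\<^sup>2" using st by (intro power_strict_mono) auto
    then have "x\<^sup>2 < ((t+s)/2)\<^sup>2" "y\<^sup>2 < (D - (t+s)/2)\<^sup>2" using hx hy id1 id2 by linarith+
    then have "x < (t+s)/2" "y < D - (t+s)/2"
      using t0 power2_less_imp_less[of x "(t+s)/2"] power2_less_imp_less[of y "D - (t+s)/2"] by auto
    then show False using xy by linarith
  qed
  have e2: "e\<^sup>2 = (t - s)\<^sup>2" using ee by simp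
  have "x\<^sup>2 \<le> ((t+s)/2)\<^sup>2" using hx id1 e2 by linarith
  moreover have "y\<^sup>2 \<le> (D - (t+s)/2)\<^sup>2" using hy id2 e2 by linarith
  ultimately
  have "x \<le> (t+s)/2" "y \<le> D - (t+s)/2"
    using t0 power2_le_imp_le[of x "(t+s)/2"] power2_le_imp_le[of y "D - (t+s)/2"] by auto
  then have "x = (s+t)/2" "y = D - (s+t)/2" using xy by (smt (verit))+
  then show ?thesis using ee by (auto simp: x_def y_def D_def e_def)
qed

lemma between_exists:
  assumes had: "hadamard TYPE('q::complete_space)"
    and t: "0 \<le> t" "t \<le> dist a b"
  shows "\<exists>z::'q. dist a z = t \<and> dist z b = dist a b - t"
proof -
  define D where "D = dist a b"
  define T where "T = {t. 0 \<le> t \<and> t \<le> D \<and> (\<exists>z. dist a z = t \<and> dist z b = D - t)}"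
  have T0: "0 \<in> T" unfolding T_def D_def by (auto intro!: exI[of _ a])
  have TD: "D \<in> T" unfolding T_def D_def by (auto intro!: exI[of _ b])
  have Tmid: "(s+t)/2 \<in> T" if sT: "s \<in> T" "t \<in> T" "s \<le> t" for s t
  proof -
    obtain z where "dist a z = t" "dist z b = D - t" using sT unfolding T_def by blast
    moreover obtain w where "dist a w = s" "dist w b = D - s" using sT unfolding T_def by blast
    ultimately obtain m where "dist a m = (s+t)/2" "dist m b = D - (s+t)/2"
      using between[OF had, of a z t b w s] sT unfolding D_def by blast
    then show ?thesis using sT unfolding T_def by auto
  qed
  have Tdist: "dist z w = \<bar>t - s\<bar>" if "dist a z = t" "dist z b = D - t" "dist a w = s" "dist w b = D - s" for z w t s
  proof (cases "s \<le> t")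
    case True
    have "dist z w = t - s" using conjunct1[OF between[OF had, of a z t b w s]] that True unfolding D_def by blast
    then show ?thesis using True by simp
  next
    case False
    have "dist w z = s - t" using conjunct1[OF between[OF had, of a w s b z t]] that False unfolding D_def by simp
    then show ?thesis using False by (simp add: dist_commute)
  qed
  have cT: "closed T"
    unfolding closed_sequential_limits
  proof (intro allI impI, elim conjE)
    fix x l assume xT: "\<forall>n. x n \<in> T" and xl: "x \<longlonglongrightarrow> l"
    have "\<forall>n. \<exists>z. dist a z = x n \<and> dist z b = D - x n" using xT unfolding T_def by blast
    from choice[OF this] obtain zs where zs: "\<And>n. dist a (zs n) = x n \<and> dist (zs n) b = D - x n"
      by blast
    have "Cauchy zs"
    proof (rule metric_CauchyI)
      fix e :: real assume "e > 0"
      obtain M where M: "\<And>m n. m \<ge> M \<Longrightarrow> n \<ge> M \<Longrightarrow> dist (x m) (x n) < e"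
        using metric_CauchyD[OF LIMSEQ_imp_Cauchy[OF xl] \<open>e > 0\<close>] by blast
      show "\<exists>M. \<forall>m\<ge>M. \<forall>n\<ge>M. dist (zs m) (zs n) < e"
      proof (intro exI allI impI)
        fix m n assume "m \<ge> M" "n \<ge> M"
        have "dist (zs m) (zs n) = \<bar>x m - x n\<bar>" by (rule Tdist) (use zs in auto)
        then show "dist (zs m) (zs n) < e" using M[OF \<open>m \<ge> M\<close> \<open>n \<ge> M\<close>] by (simp add: dist_real_def)
      qed
    qed
    then obtain z where zl: "zs \<longlonglongrightarrow> z" using Cauchy_convergent_iff convergent_def by blast
    have "(\<lambda>n. dist a (zs n)) \<longlonglongrightarrow> dist a z" by (intro tendsto_intros zl)
    moreover have "(\<lambda>n. dist a (zs n)) \<longlonglongrightarrow> l" using xl zs by simp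
    ultimately have 1: "dist a z = l" using LIMSEQ_unique by blast
    have "(\<lambda>n. dist (zs n) b) \<longlonglongrightarrow> dist z b" by (intro tendsto_intros zl)
    moreover have "(\<lambda>n. dist (zs n) b) \<longlonglongrightarrow> D - l" using xl zs by (simp add: tendsto_intros)
    ultimately have 2: "dist z b = D - l" using LIMSEQ_unique by blast
    have "0 \<le> l" "l \<le> D" using 1 2 zero_le_dist[of a z] zero_le_dist[of z b] by linarith+
    then show "l \<in> T" unfolding T_def using 1 2 by blast
  qed
  have "t \<in> T"
  proof (rule ccontr)
    assume tT: "t \<notin> T"
    define A where "A = T \<inter> {..t}"
    define B where "B = T \<inter> {t..}"
    have "A \<noteq> {}" using T0 t by (auto simp: A_def)
    moreover have "bdd_above A" by (auto simp: A_def)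
    moreover have "closed A" using cT by (auto simp: A_def)
    ultimately have lA: "Sup A \<in> A" by (rule closed_contains_Sup)
    have "B \<noteq> {}" using TD t by (auto simp: B_def D_def)
    moreover have "bdd_below B" by (auto simp: B_def)
    moreover have "closed B" using cT by (auto simp: B_def)
    ultimately have rB: "Inf B \<in> B" by (rule closed_contains_Inf)
    define l where "l = Sup A"
    define r where "r = Inf B"
    have lA': "l \<in> A" "r \<in> B" using lA rB by (simp_all add: l_def r_def)
    have lt: "l < t" using lA' tT by (auto simp: A_def order.order_iff_strict)
    have rt: "t < r" using lA' tT by (auto simp: B_def order.order_iff_strict)
    have mT: "(l + r)/2 \<in> T" using Tmid lA' lt rt by (auto simp: A_def B_def)
    show False
    proof (cases "(l + r)/2 \<le> t")
      case True
      then have "(l + r)/2 \<in> A" using mT by (auto simp: A_def)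
      then have "(l + r)/2 \<le> l" unfolding l_def by (intro cSup_upper) (auto simp: A_def)
      then have "r \<le> l" by (simp add: field_simps)
      then show False using lt rt by linarith
    next
      case False
      then have "(l + r)/2 \<in> B" using mT by (auto simp: B_def)
      then have "r \<le> (l + r)/2" unfolding r_def by (intro cInf_lower) (auto simp: B_def)
      then have "r \<le> l" by (simp add: field_simps)
      then show False using lt rt by linarith
    qed
  qed
  then show ?thesis unfolding T_def D_def by blast
qed

lemma geodesic_exists:
  assumes had: "hadamard TYPE('q::complete_space)"
  shows "\<exists>\<gamma>. geodesic_between (a::'q) b \<gamma> \<and> dist a (\<gamma> (dist a b / 2)) = dist a b / 2
     \<and> dist b (\<gamma> (dist a b / 2)) = dist a b / 2"
proof -
  define D where "D = dist a b"
  define \<gamma> where "\<gamma> s = (SOME z. dist a z = s \<and> dist z b = D - s)" for s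
  have g: "dist a (\<gamma> s) = s \<and> dist (\<gamma> s) b = D - s" if "0 \<le> s" "s \<le> D" for s
    unfolding \<gamma>_def by (rule someI_ex) (use between_exists[OF had that[unfolded D_def]] D_def in auto)
  have "\<gamma> 0 = a" using g[of 0] by (simp add: D_def)
  moreover have "\<gamma> D = b" using g[of D] by (simp add: D_def)
  moreover have "dist (\<gamma> s) (\<gamma> t) = \<bar>s - t\<bar>" if "s \<in> {0..D}" "t \<in> {0..D}" for s t
  proof (cases "s \<le> t")
    case True then show ?thesis using between[OF had, of a "\<gamma> t" t b "\<gamma> s" s] g that
      by (auto simp: D_def dist_commute)
  next
    case False then show ?thesis using between[OF had, of a "\<gamma> s" s b "\<gamma> t" t] g that
      by (auto simp: D_def dist_commute)
  qed
  ultimately have "geodesic_between a b \<gamma>" unfolding geodesic_between_def D_def by auto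
  moreover have "dist a (\<gamma> (D/2)) = D/2" "dist b (\<gamma> (D/2)) = D/2" using g[of "D/2"]
    by (auto simp: D_def dist_commute)
  ultimately show ?thesis unfolding D_def by blast
qed

lemma convex_set_mid:
  assumes had: "hadamard TYPE('q::complete_space)"
    and C: "geod_convex_set C" and "(a::'q) \<in> C" "b \<in> C"
  shows "\<exists>c\<in>C. dist a c = dist a b / 2 \<and> dist b c = dist a b / 2"
proof (cases "a = b")
  case True then show ?thesis using assms by auto
next
  case False
  obtain \<gamma> where g: "geodesic_between a b \<gamma>" "dist a (\<gamma> (dist a b / 2)) = dist a b / 2"
     "dist b (\<gamma> (dist a b / 2)) = dist a b / 2" using geodesic_exists[OF had] by blast
  have "\<gamma> ` {0..dist a b} \<subseteq> C" using C False assms g unfolding geod_convex_set_def by blast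
  then have "\<gamma> (dist a b / 2) \<in> C" by auto
  then show ?thesis using g by blast
qed

lemma geodesic_mid:
  assumes "geodesic_between q p \<gamma>" "s \<in> {0..dist q p}" "u \<in> {0..dist q p}"
  shows "dist (\<gamma> s) (\<gamma> ((s+u)/2)) = dist (\<gamma> s) (\<gamma> u) / 2"
    "dist (\<gamma> u) (\<gamma> ((s+u)/2)) = dist (\<gamma> s) (\<gamma> u) / 2"
proof -
  have m: "(s+u)/2 \<in> {0..dist q p}" using assms by auto
  have d: "\<And>a b. a \<in> {0..dist q p} \<Longrightarrow> b \<in> {0..dist q p} \<Longrightarrow> dist (\<gamma> a) (\<gamma> b) = \<bar>a - b\<bar>"
    using assms(1) unfolding geodesic_between_def by blast
  show "dist (\<gamma> s) (\<gamma> ((s+u)/2)) = dist (\<gamma> s) (\<gamma> u) / 2"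
    "dist (\<gamma> u) (\<gamma> ((s+u)/2)) = dist (\<gamma> s) (\<gamma> u) / 2"
    using d[OF assms(2) m] d[OF assms(3) m] d[OF assms(2,3)]
      abs_minus_commute[of s u] by (simp_all add: abs_if field_simps)
qed

lemma geodesic_cont:
  assumes "geodesic_between q p \<gamma>"
  shows "continuous_on {0..dist q p} \<gamma>"
proof -
  have d: "\<And>a b. a \<in> {0..dist q p} \<Longrightarrow> b \<in> {0..dist q p} \<Longrightarrow> dist (\<gamma> a) (\<gamma> b) = \<bar>a - b\<bar>"
    using assms(1) unfolding geodesic_between_def by blast
  show ?thesis unfolding continuous_on_iff
    by (metis d dist_real_def)
qed

lemma midpoint_convex:
  fixes f :: "real \<Rightarrow> real"
  assumes cont: "continuous_on {a..b} f"
    and mid: "\<And>x y. x \<in> {a..b} \<Longrightarrow> y \<in> {a..b} \<Longrightarrow> f ((x+y)/2) \<le> (f x + f y)/2"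
  shows "convex_on {a..b} f"
proof (rule convex_on_linorderI)
  show "convex {a..b}" by simp
  fix t x y :: real assume t: "0 < t" "t < 1" and xy: "x \<in> {a..b}" "y \<in> {a..b}" "x < y"
  define c where "c = (f y - f x) / (y - x)"
  define g where "g s = f s - f x - (s - x) * c" for s
  have sub: "{x..y} \<subseteq> {a..b}" using xy by auto
  have gc: "continuous_on {x..y} g" unfolding g_def
    by (intro continuous_intros continuous_on_subset[OF cont sub])
  have gmid: "g ((u+v)/2) \<le> (g u + g v)/2" if "u \<in> {x..y}" "v \<in> {x..y}" for u v
  proof -
    have "f ((u+v)/2) \<le> (f u + f v)/2" using mid that sub by auto
    moreover have id: "((u+v)/2 - x) * c = ((u - x) * c + (v - x) * c)/2"
      by (simp add: algebra_simps)
    have gm: "g ((u+v)/2) = f ((u+v)/2) - f x - ((u - x) * c + (v - x) * c)/2"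
      unfolding g_def by (subst id) (rule refl)
    ultimately show ?thesis unfolding gm unfolding g_def by (simp add: field_simps)
  qed
  have gle: "g s \<le> 0" if "s \<in> {x..y}" for s
  proof (rule ccontr)
    assume "\<not> g s \<le> 0"
    obtain s0 where s0: "s0 \<in> {x..y}" "\<And>u. u \<in> {x..y} \<Longrightarrow> g u \<le> g s0"
      using continuous_attains_sup[OF compact_Icc _ gc] xy by auto
    define M where "M = g s0"
    have Mpos: "M > 0" using s0(2)[OF that] \<open>\<not> g s \<le> 0\<close> unfolding M_def by simp
    define K where "K = {u \<in> {x..y}. g u = M}"
    have "closed K" unfolding K_def by (rule continuous_closed_preimage_constant[OF gc]) simp
    have "K \<noteq> {}" using s0 unfolding K_def M_def by auto
    moreover have "bdd_below K" unfolding K_def by (auto intro: bdd_belowI[of _ x])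
    moreover note \<open>closed K\<close>
    ultimately have t0K: "Inf K \<in> K" by (rule closed_contains_Inf)
    define t0 where "t0 = Inf K"
    have gx: "g x = 0" "g y = 0" unfolding g_def c_def using xy by auto
    have t0: "x < t0" "t0 < y" "g t0 = M" using t0K Mpos gx unfolding K_def t0_def
      by (auto simp: order.order_iff_strict)
    define h where "h = min (t0 - x) (y - t0)"
    have h: "h > 0" "t0 - h \<in> {x..y}" "t0 + h \<in> {x..y}" using t0 by (auto simp: h_def)
    have "g (t0 - h) \<noteq> M"
    proof
      assume "g (t0 - h) = M"
      then have "t0 - h \<in> K" using h unfolding K_def by auto
      then have "t0 \<le> t0 - h" unfolding t0_def by (intro cInf_lower) (auto simp: K_def)
      then show False using h by simp
    qed
    then have 1: "g (t0 - h) < M" using s0(2)[OF h(2)] unfolding M_def by simp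
    have 2: "g (t0 + h) \<le> M" using s0(2)[OF h(3)] unfolding M_def by simp
    have "g t0 \<le> (g (t0 - h) + g (t0 + h))/2" using gmid[OF h(2,3)] by simp
    then show False using 1 2 t0 by simp
  qed
  define s where "s = (1 - t) *\<^sub>R x + t *\<^sub>R y"
  have s1: "s = x + t * (y - x)" unfolding s_def by (simp add: algebra_simps)
  have "t * (y - x) \<ge> 0" "t * (y - x) \<le> 1 * (y - x)" using t xy
    by (simp, intro mult_right_mono) auto
  then have s: "s \<in> {x..y}" using s1 by auto
  have "(s - x) * c = t * (f y - f x)" unfolding s_def c_def using xy by (simp add: field_simps)
  then have "f s \<le> f x + t * (f y - f x)" using gle[OF s] unfolding g_def by simp
  then show "f ((1 - t) *\<^sub>R x + t *\<^sub>R y) \<le> (1 - t) * f x + t * f y"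
    unfolding s_def by (simp add: algebra_simps)
qed




locale setting = prob_space P for P :: "'w measure" +
  fixes Y :: "'w \<Rightarrow> 'q::complete_space" and x0 :: 'q and \<tau> :: "real \<Rightarrow> real"
  assumes had: "hadamard TYPE('q)"
    and Ymeas: "Y \<in> measurable P borel"
    and tau: "\<tau> \<in> S0plus"
    and fin: "(\<integral>\<^sup>+ \<omega>. ennreal (tau_deriv \<tau> (dist (Y \<omega>) x0)) \<partial>P) < \<infinity>"
begin

abbreviation "v \<equiv> var_fun P Y \<tau> x0"
definition "H \<omega> = h2 \<tau> (dist (Y \<omega>) x0)"
definition "EH = (\<integral>\<omega>. H \<omega> \<partial>P)"

lemma dist_meas[measurable]: "(\<lambda>\<omega>. dist (Y \<omega>) q) \<in> borel_measurable P"
proof -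
  have "(\<lambda>y. dist y q) \<in> borel_measurable borel"
    by (intro borel_measurable_continuous_onI continuous_intros)
  from measurable_compose[OF Ymeas this] show ?thesis .
qed

lemma taud_meas[measurable]: "(\<lambda>\<omega>. \<tau> (dist (Y \<omega>) q)) \<in> borel_measurable P"
proof -
  have "(\<lambda>\<omega>. \<tau> (max (dist (Y \<omega>) q) 0)) \<in> borel_measurable P"
    using measurable_compose[OF dist_meas tau_meas[OF tau]] by simp
  then show ?thesis by simp
qed

lemma H_meas[measurable]: "H \<in> borel_measurable P"
  unfolding H_def using measurable_compose[OF dist_meas borel_measurable_mono[OF h2_mono'[OF tau]]] .

lemma H_nonneg: "H \<omega> \<ge> 0" unfolding H_def by (rule h2_nonneg[OF tau])

lemma H_int: "integrable P H"
proof (rule integrableI_nonneg)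
  show "H \<in> borel_measurable P" by measurable
  show "AE x in P. 0 \<le> H x" using H_nonneg by simp
  have "(\<integral>\<^sup>+ x. ennreal (H x) \<partial>P) \<le> (\<integral>\<^sup>+ \<omega>. ennreal (tau_deriv \<tau> (dist (Y \<omega>) x0)) \<partial>P)"
    unfolding H_def by (intro nn_integral_mono h2_le_tau_deriv[OF tau]) simp
  then show "(\<integral>\<^sup>+ x. ennreal (H x) \<partial>P) < \<infinity>" using fin by (rule le_less_trans)
qed

lemma EH_nonneg: "EH \<ge> 0" unfolding EH_def using H_nonneg by (simp add: integral_nonneg_AE)

lemma pt_bound:
  assumes "dist x0 q \<le> R" "dist x0 q' \<le> R"
  shows "\<bar>\<tau> (dist y q) - \<tau> (dist y q')\<bar> \<le> 3 * (h2 \<tau> (dist y x0) + h2 \<tau> R) * dist q q'"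
proof -
  have R: "R \<ge> 0" using assms(1) zero_le_dist[of x0 q] by linarith
  have a: "dist y q \<le> dist y x0 + R" "dist y q' \<le> dist y x0 + R" using assms
    by (smt (verit) dist_triangle)+
  have "\<bar>\<tau> (dist y q) - \<tau> (dist y q')\<bar> \<le> h2 \<tau> (max (dist y q) (dist y q')) * \<bar>dist y q - dist y q'\<bar>"
    by (rule tau_lip_abs[OF tau]) auto
  also have "\<dots> \<le> h2 \<tau> (dist y x0 + R) * dist q q'"
  proof (rule mult_mono)
    show "h2 \<tau> (max (dist y q) (dist y q')) \<le> h2 \<tau> (dist y x0 + R)"
      by (rule h2_mono[OF tau]) (use a in auto)
    show "\<bar>dist y q - dist y q'\<bar> \<le> dist q q'"
      by (smt (verit) dist_commute dist_triangle)
  qed (auto simp: h2_nonneg[OF tau])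
  also have "\<dots> \<le> 3 * (h2 \<tau> (dist y x0) + h2 \<tau> R) * dist q q'"
    by (rule mult_right_mono[OF h2_add[OF tau]]) (use R in auto)
  finally show ?thesis .
qed

lemma f_int: "integrable P (\<lambda>\<omega>. \<tau> (dist (Y \<omega>) q) - \<tau> (dist (Y \<omega>) q'))"
proof -
  define R where "R = max (dist x0 q) (dist x0 q')"
  have "integrable P (\<lambda>\<omega>. 3 * (H \<omega> + h2 \<tau> R) * dist q q')"
    using H_int by simp
  moreover have "(\<lambda>\<omega>. \<tau> (dist (Y \<omega>) q) - \<tau> (dist (Y \<omega>) q')) \<in> borel_measurable P" by measurable
  moreover have "AE x in P. norm (\<tau> (dist (Y x) q) - \<tau> (dist (Y x) q')) \<le> norm (3 * (H x + h2 \<tau> R) * dist q q')"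
  proof (intro AE_I2)
    fix x
    have "0 \<le> 3 * (H x + h2 \<tau> R) * dist q q'" using H_nonneg[of x] h2_nonneg[OF tau, of R] by simp
    then show "norm (\<tau> (dist (Y x) q) - \<tau> (dist (Y x) q')) \<le> norm (3 * (H x + h2 \<tau> R) * dist q q')"
      using pt_bound[of q R q' "Y x"] by (simp add: R_def H_def)
  qed
  ultimately show ?thesis
    using Bochner_Integration.integrable_bound[of P "\<lambda>\<omega>. 3 * (H \<omega> + h2 \<tau> R) * dist q q'" "\<lambda>\<omega>. \<tau> (dist (Y \<omega>) q) - \<tau> (dist (Y \<omega>) q')"]
    by blast
qed

lemma v_diff: "v q - v q' = (\<integral>\<omega>. \<tau> (dist (Y \<omega>) q) - \<tau> (dist (Y \<omega>) q') \<partial>P)"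
proof -
  have "v q - v q' = (\<integral>\<omega>. (\<tau> (dist (Y \<omega>) q) - \<tau> (dist (Y \<omega>) x0)) - (\<tau> (dist (Y \<omega>) q') - \<tau> (dist (Y \<omega>) x0)) \<partial>P)"
    unfolding var_fun_def using Bochner_Integration.integral_diff[OF f_int[of q x0] f_int[of q' x0]] by simp
  then show ?thesis by simp
qed

lemma v_x0: "v x0 = 0" unfolding var_fun_def by simp

lemma v_lip:
  assumes "dist x0 q \<le> R" "dist x0 q' \<le> R"
  shows "\<bar>v q - v q'\<bar> \<le> 3 * (EH + h2 \<tau> R) * dist q q'"
proof -
  have "\<bar>v q - v q'\<bar> \<le> (\<integral>\<omega>. \<bar>\<tau> (dist (Y \<omega>) q) - \<tau> (dist (Y \<omega>) q')\<bar> \<partial>P)"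
    unfolding v_diff using integral_norm_bound[of P "\<lambda>\<omega>. \<tau> (dist (Y \<omega>) q) - \<tau> (dist (Y \<omega>) q')"]
    by simp
  also have "\<dots> \<le> (\<integral>\<omega>. 3 * (H \<omega> + h2 \<tau> R) * dist q q' \<partial>P)"
  proof (rule integral_mono)
    show "integrable P (\<lambda>\<omega>. 3 * (H \<omega> + h2 \<tau> R) * dist q q')" using H_int by simp
    show "integrable P (\<lambda>\<omega>. \<bar>\<tau> (dist (Y \<omega>) q) - \<tau> (dist (Y \<omega>) q')\<bar>)"
      by (rule integrable_abs[OF f_int])
  qed (use pt_bound[OF assms] in \<open>simp add: H_def\<close>)
  also have "\<dots> = 3 * (EH + h2 \<tau> R) * dist q q'"
    using H_int prob_space by (simp add: EH_def)
  finally show ?thesis .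
qed

lemma v_cont: "continuous_on UNIV v"
  unfolding continuous_on_iff
proof (intro ballI allI impI)
  fix q :: 'q and e :: real assume "e > 0"
  define R where "R = dist x0 q + 1"
  define K where "K = 3 * (EH + h2 \<tau> R) + 1"
  have "0 \<le> 3 * (EH + h2 \<tau> R)" using EH_nonneg h2_nonneg[OF tau, of R] by simp
  then have K: "K > 0" unfolding K_def by (intro add_nonneg_pos) auto
  show "\<exists>d>0. \<forall>q'\<in>UNIV. dist q' q < d \<longrightarrow> dist (v q') (v q) < e"
  proof (intro exI[of _ "min 1 (e / K)"] conjI ballI impI)
    show "min 1 (e / K) > 0" using K \<open>e > 0\<close> by simp
    fix q' assume q': "dist q' q < min 1 (e / K)"
    have "dist x0 q' \<le> dist x0 q + dist q q'" by (rule dist_triangle)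
    moreover have "dist q q' < 1" using q' by (simp add: dist_commute)
    ultimately have "dist x0 q' \<le> R" unfolding R_def by linarith
    then have "\<bar>v q' - v q\<bar> \<le> 3 * (EH + h2 \<tau> R) * dist q' q" by (intro v_lip) (auto simp: R_def)
    also have "\<dots> \<le> K * dist q' q" unfolding K_def by (intro mult_right_mono) auto
    also have "\<dots> < K * (e / K)" using q' K by (intro mult_strict_left_mono) auto
    also have "\<dots> = e" using K by simp
    finally show "dist (v q') (v q) < e" by (simp add: dist_real_def)
  qed
qed

lemma v_mid:
  assumes "dist a c = dist a b / 2" "dist b c = dist a b / 2"
  shows "v c \<le> (v a + v b) / 2"
proof -
  have "v c - v a \<le> (v b - v a) / 2"
  proof -
    have "v c - v a = (\<integral>\<omega>. \<tau> (dist (Y \<omega>) c) - \<tau> (dist (Y \<omega>) a) \<partial>P)" by (rule v_diff)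
    also have "\<dots> \<le> (\<integral>\<omega>. (\<tau> (dist (Y \<omega>) b) - \<tau> (dist (Y \<omega>) a)) / 2 \<partial>P)"
    proof (rule integral_mono[OF f_int])
      show "integrable P (\<lambda>\<omega>. (\<tau> (dist (Y \<omega>) b) - \<tau> (dist (Y \<omega>) a)) / 2)" using f_int by simp
      fix \<omega> assume "\<omega> \<in> space P"
      have "\<tau> (dist (Y \<omega>) c) \<le> (\<tau> (dist (Y \<omega>) a) + \<tau> (dist (Y \<omega>) b)) / 2"
        by (rule tau_mid[OF tau]) (use mid_dist[OF had assms, of "Y \<omega>"] in auto)
      then show "\<tau> (dist (Y \<omega>) c) - \<tau> (dist (Y \<omega>) a) \<le> (\<tau> (dist (Y \<omega>) b) - \<tau> (dist (Y \<omega>) a)) / 2"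
        by simp
    qed
    also have "\<dots> = (v b - v a) / 2" using v_diff[of b a] by simp
    finally show ?thesis .
  qed
  then show ?thesis by simp
qed

lemma v_lower: "v q \<ge> - EH * dist x0 q"
proof -
  have "v q - v x0 \<ge> (\<integral>\<omega>. - (H \<omega> * dist x0 q) \<partial>P)"
    unfolding v_diff
  proof (rule integral_mono[OF _ f_int])
    show "integrable P (\<lambda>\<omega>. - (H \<omega> * dist x0 q))" using H_int by simp
    fix \<omega> assume "\<omega> \<in> space P"
    show "- (H \<omega> * dist x0 q) \<le> \<tau> (dist (Y \<omega>) q) - \<tau> (dist (Y \<omega>) x0)"
    proof (cases "dist (Y \<omega>) x0 \<le> dist (Y \<omega>) q")
      case True
      have "H \<omega> * dist x0 q \<ge> 0" by (intro mult_nonneg_nonneg H_nonneg zero_le_dist)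
      then show ?thesis using tau_mono[OF tau, of "dist (Y \<omega>) x0" "dist (Y \<omega>) q"] True
        by simp
    next
      case False
      then have "\<tau> (dist (Y \<omega>) x0) - \<tau> (dist (Y \<omega>) q) \<le> H \<omega> * (dist (Y \<omega>) x0 - dist (Y \<omega>) q)"
        unfolding H_def by (intro tau_lip[OF tau]) auto
      also have "\<dots> \<le> H \<omega> * dist x0 q"
        by (intro mult_left_mono H_nonneg) (smt (verit) dist_commute dist_triangle)
      finally show ?thesis by simp
    qed
  qed
  then show ?thesis using H_int by (simp add: v_x0 EH_def)
qed

end



context setting begin

lemma f_lower_pt: "\<tau> (dist y q) - \<tau> (dist y x0) \<ge> - (h2 \<tau> (dist y x0) * dist x0 q)"
proof (cases "dist y x0 \<le> dist y q")
  case True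
  have "h2 \<tau> (dist y x0) * dist x0 q \<ge> 0" by (intro mult_nonneg_nonneg h2_nonneg[OF tau] zero_le_dist)
  then show ?thesis using tau_mono[OF tau, of "dist y x0" "dist y q"] True by simp
next
  case False
  then have "\<tau> (dist y x0) - \<tau> (dist y q) \<le> h2 \<tau> (dist y x0) * (dist y x0 - dist y q)"
    by (intro tau_lip[OF tau]) auto
  also have "\<dots> \<le> h2 \<tau> (dist y x0) * dist x0 q"
    by (intro mult_left_mono h2_nonneg[OF tau]) (smt (verit) dist_commute dist_triangle)
  finally show ?thesis by simp
qed

lemma coercive: "\<exists>R0\<ge>0. \<forall>q. dist x0 q \<ge> R0 \<longrightarrow> v q \<ge> 2"
proof -
  define c where "c = deriv \<tau> 1"
  have c: "c > 0" unfolding c_def by (rule tau_dpos[OF tau]) simp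
  define d where "d \<omega> = dist (Y \<omega>) x0" for \<omega>
  have d_meas[measurable]: "d \<in> borel_measurable P" unfolding d_def by measurable
  define s where "s n \<omega> = H \<omega> * (if d \<omega> > real n then 1 else 0)" for n :: nat and \<omega>
  define t where "t n \<omega> = (if d \<omega> \<le> real n then 1 else 0 :: real)" for n :: nat and \<omega>
  have s_meas[measurable]: "s n \<in> borel_measurable P" for n unfolding s_def by measurable
  have t_meas[measurable]: "t n \<in> borel_measurable P" for n unfolding t_def by measurable
  have ev: "\<forall>\<^sub>F n in sequentially. d \<omega> \<le> real n" for \<omega>
  proof -
    obtain N :: nat where "d \<omega> \<le> real N" using real_arch_simple by blast
    then show ?thesis unfolding eventually_sequentially
      by (intro exI[of _ N]) (auto intro: order_trans)
  qed
  have lim_s: "(\<lambda>n. \<integral>\<omega>. s n \<omega> \<partial>P) \<longlonglongrightarrow> (\<integral>\<omega>. 0 \<partial>P)"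
  proof (rule integral_dominated_convergence[where w = H])
    show "(\<lambda>\<omega>. 0::real) \<in> borel_measurable P" by simp
    show "s n \<in> borel_measurable P" for n by measurable
    show "integrable P H" by (rule H_int)
    show "AE \<omega> in P. (\<lambda>n. s n \<omega>) \<longlonglongrightarrow> 0"
    proof (intro AE_I2 tendsto_eventually)
      fix \<omega> show "\<forall>\<^sub>F n in sequentially. s n \<omega> = 0"
        using ev[of \<omega>] by eventually_elim (simp add: s_def)
    qed
    show "AE \<omega> in P. norm (s n \<omega>) \<le> H \<omega>" for n
      using H_nonneg by (intro AE_I2) (simp add: s_def)
  qed
  have lim_t: "(\<lambda>n. \<integral>\<omega>. t n \<omega> \<partial>P) \<longlonglongrightarrow> (\<integral>\<omega>. 1 \<partial>P)"
  proof (rule integral_dominated_convergence[where w = "\<lambda>_. 1"])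
    show "(\<lambda>\<omega>. 1::real) \<in> borel_measurable P" by simp
    show "t n \<in> borel_measurable P" for n by measurable
    show "integrable P (\<lambda>_. 1::real)" by simp
    show "AE \<omega> in P. (\<lambda>n. t n \<omega>) \<longlonglongrightarrow> 1"
    proof (intro AE_I2 tendsto_eventually)
      fix \<omega> show "\<forall>\<^sub>F n in sequentially. t n \<omega> = 1"
        using ev[of \<omega>] by eventually_elim (simp add: t_def)
    qed
    show "AE \<omega> in P. norm (t n \<omega>) \<le> 1" for n
      by (intro AE_I2) (simp add: t_def)
  qed
  have "\<forall>\<^sub>F n in sequentially. (\<integral>\<omega>. s n \<omega> \<partial>P) < c / 4"
    by (rule order_tendstoD(2)[OF lim_s]) (use c in simp)
  moreover have "\<forall>\<^sub>F n in sequentially. 1/2 < (\<integral>\<omega>. t n \<omega> \<partial>P)"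
    by (rule order_tendstoD(1)[OF lim_t]) (use prob_space in simp)
  ultimately have "\<forall>\<^sub>F n in sequentially. (\<integral>\<omega>. s n \<omega> \<partial>P) < c / 4 \<and> 1/2 < (\<integral>\<omega>. t n \<omega> \<partial>P)"
    by eventually_elim simp
  then obtain N where N: "(\<integral>\<omega>. s N \<omega> \<partial>P) < c / 4" "1/2 < (\<integral>\<omega>. t N \<omega> \<partial>P)"
    unfolding eventually_sequentially by blast
  define \<rho> where "\<rho> = real N"
  have \<rho>: "\<rho> \<ge> 0" unfolding \<rho>_def by simp
  have "AE x in P. norm (s N x) \<le> norm (H x)" using H_nonneg by (intro AE_I2) (simp add: s_def)
  then have s_int: "integrable P (s N)"
    using Bochner_Integration.integrable_bound[OF H_int s_meas] by blast
  have t_int: "integrable P (t N)"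
    by (rule Bochner_Integration.integrable_bound[of P "\<lambda>_. 1::real"]) (auto simp: t_def)
  define K where "K = (2 + c * (\<rho> + 1) / 2 + \<tau> \<rho> / 2) * 4 / c"
  define R0 where "R0 = max (2 * \<rho>) K"
  have "\<forall>q. dist x0 q \<ge> R0 \<longrightarrow> v q \<ge> 2"
  proof (intro allI impI)
    fix q assume q: "dist x0 q \<ge> R0"
    define R where "R = dist x0 q"
    have R: "R \<ge> 2 * \<rho>" "R \<ge> K" using q unfolding R_def R0_def by auto
    define A where "A = \<tau> (R - \<rho>) - \<tau> \<rho>"
    have A0: "A \<ge> 0" unfolding A_def using tau_mono[OF tau, of \<rho> "R - \<rho>"] R \<rho> by simp
    have A1: "A \<ge> c * (R - \<rho> - 1) - \<tau> \<rho>"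
      unfolding A_def c_def using tau_linear_lower[OF tau, of "R - \<rho>"] R \<rho> by simp
    have pt: "\<tau> (dist (Y \<omega>) q) - \<tau> (dist (Y \<omega>) x0) \<ge> t N \<omega> * A - R * s N \<omega>" for \<omega>
    proof (cases "d \<omega> \<le> \<rho>")
      case True
      have "R \<le> d \<omega> + dist (Y \<omega>) q" unfolding R_def d_def
        by (metis dist_commute dist_triangle)
      then have "\<tau> (R - \<rho>) \<le> \<tau> (dist (Y \<omega>) q)" using True R \<rho> by (intro tau_mono[OF tau]) auto
      moreover have "\<tau> (dist (Y \<omega>) x0) \<le> \<tau> \<rho>" using True by (intro tau_mono[OF tau]) (auto simp: d_def)
      ultimately show ?thesis using True by (simp add: t_def s_def A_def \<rho>_def)
    next
      case False
      then show ?thesis using f_lower_pt[of "Y \<omega>" q]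
        by (simp add: t_def s_def \<rho>_def R_def H_def d_def mult.commute)
    qed
    have "v q = (\<integral>\<omega>. \<tau> (dist (Y \<omega>) q) - \<tau> (dist (Y \<omega>) x0) \<partial>P)" by (simp add: var_fun_def)
    also have "\<dots> \<ge> (\<integral>\<omega>. t N \<omega> * A - R * s N \<omega> \<partial>P)"
      by (rule integral_mono) (use pt f_int s_int t_int in auto)
    finally have "v q \<ge> (\<integral>\<omega>. t N \<omega> * A - R * s N \<omega> \<partial>P)" .
    also have "(\<integral>\<omega>. t N \<omega> * A - R * s N \<omega> \<partial>P) = (\<integral>\<omega>. t N \<omega> \<partial>P) * A - R * (\<integral>\<omega>. s N \<omega> \<partial>P)"
      using s_int t_int by simp
    finally have v1: "v q \<ge> (\<integral>\<omega>. t N \<omega> \<partial>P) * A - R * (\<integral>\<omega>. s N \<omega> \<partial>P)" .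
    have "(\<integral>\<omega>. t N \<omega> \<partial>P) * A \<ge> (1/2) * A" using N A0 by (intro mult_right_mono) auto
    moreover have "R * (\<integral>\<omega>. s N \<omega> \<partial>P) \<le> R * (c/4)" using N R \<rho> by (intro mult_left_mono) auto
    ultimately have v2: "v q \<ge> (1/2) * A - R * (c/4)" using v1 by linarith
    have "(1/2) * A - R * (c/4) \<ge> (1/2) * (c * (R - \<rho> - 1) - \<tau> \<rho>) - R * (c/4)"
      using A1 by simp
    also have "(1/2) * (c * (R - \<rho> - 1) - \<tau> \<rho>) - R * (c/4) = R * c / 4 - (c * (\<rho> + 1) / 2 + \<tau> \<rho> / 2)"
      by (simp add: algebra_simps)
    also have "R * c / 4 \<ge> K * c / 4" using R c by (intro divide_right_mono mult_right_mono) auto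
    then have "R * c / 4 - (c * (\<rho> + 1) / 2 + \<tau> \<rho> / 2) \<ge> K * c / 4 - (c * (\<rho> + 1) / 2 + \<tau> \<rho> / 2)"
      by simp
    moreover have "K * c / 4 = 2 + c * (\<rho> + 1) / 2 + \<tau> \<rho> / 2" unfolding K_def using c by simp
    ultimately show "v q \<ge> 2" using v2 by linarith
  qed
  moreover have "R0 \<ge> 0" unfolding R0_def using \<rho> by simp
  ultimately show ?thesis by blast
qed

end



lemma aux_lin:
  fixes xc a b d r2 E LL y z e :: real
  assumes "xc \<le> 1/2*a + 1/2*b - 1/4*d" "r2 \<le> xc" "a \<le> E" "b \<le> E" "r2 \<ge> LL - 2*y" "E \<le> LL + 2*z + e"
  shows "d \<le> 8*z + 4*e + 8*y"
  using assms by linarith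

lemma aux_lin2:
  fixes X P Q W d2 :: real
  assumes "X - P \<le> Q + W" "d2 \<le> X" "W \<le> 0"
  shows "d2 - P \<le> Q"
  using assms by linarith

lemma nested_cauchy:
  fixes S :: "nat \<Rightarrow> 'q::complete_space set" and x :: 'q
  assumes had: "hadamard TYPE('q)"
    and dec: "\<And>n. S (Suc n) \<subseteq> S n"
    and ne: "\<And>n. S n \<noteq> {}"
    and mid: "\<And>n a b. a \<in> S n \<Longrightarrow> b \<in> S n \<Longrightarrow> \<exists>c\<in>S n. dist a c = dist a b / 2 \<and> dist b c = dist a b / 2"
    and bnd: "\<And>n. \<exists>z\<in>S n. dist x z \<le> B"
  shows "\<exists>p. (\<forall>n. p n \<in> S n) \<and> Cauchy p \<and>
    (\<forall>n. dist x (p n) \<le> Inf (dist x ` S n) + inverse (real (Suc n)))"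
proof -
  define r where "r n = Inf (dist x ` S n)" for n
  define e where "e n = inverse (real (Suc n))" for n
  have e: "0 < e n" "e n \<le> 1" for n unfolding e_def by (auto simp: field_simps)
  have bdd: "bdd_below (dist x ` S n)" for n by (auto intro: bdd_belowI[of _ 0])
  have r_le: "r n \<le> dist x z" if "z \<in> S n" for n z
    unfolding r_def by (rule cInf_lower) (use that bdd in auto)
  have r0: "0 \<le> r n" for n unfolding r_def using ne[of n] by (intro cInf_greatest) auto
  have sub: "S m \<subseteq> S n" if "n \<le> m" for n m
    using lift_Suc_antimono_le[of S, OF dec that] by simp
  have r_mono: "r n \<le> r m" if "n \<le> m" for n m
    unfolding r_def using ne[of m] bdd[of n] sub[OF that] by (intro cInf_superset_mono) auto
  have rB: "r n \<le> B" for n using bnd[of n] r_le by force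
  have "\<forall>n. \<exists>z. z \<in> S n \<and> dist x z < r n + e n"
  proof
    fix n
    have "Inf (dist x ` S n) < r n + e n" using e[of n] unfolding r_def by simp
    then show "\<exists>z. z \<in> S n \<and> dist x z < r n + e n"
      using cInf_less_iff[OF _ bdd[of n]] ne[of n] by auto
  qed
  from choice[OF this] obtain p where p: "\<And>n. p n \<in> S n" "\<And>n. dist x (p n) < r n + e n" by blast
  have "incseq r" using r_mono by (simp add: incseq_def)
  then obtain L where L0': "r \<longlonglongrightarrow> L" "\<forall>i. r i \<le> L"
    using incseq_convergent[of r B] rB by blast
  then have L: "r \<longlonglongrightarrow> L" "\<And>i. r i \<le> L" by auto
  have L0: "L \<ge> 0" using r0[of 0] L(2)[of 0] by linarith
  define b where "b n = 8 * (L * e n) + 4 * e n + 8 * (L * (L - r n))" for n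
  have key: "(dist (p n) (p m))\<^sup>2 \<le> b n" if nm: "n \<le> m" for n m
  proof -
    define D where "D = dist (p n) (p m)"
    obtain c where c: "c \<in> S n" "dist (p n) c = D / 2" "dist (p m) c = D / 2"
      using mid[of "p n" n "p m"] p(1) sub[OF nm] unfolding D_def by blast
    have h1: "(dist x c)\<^sup>2 \<le> (1/2) * (dist (p n) x)\<^sup>2 + (1/2) * (dist (p m) x)\<^sup>2 - (1/4) * D\<^sup>2"
      using mid_ineq[OF had c(2,3)[unfolded D_def]] unfolding D_def .
    have h2: "(r n)\<^sup>2 \<le> (dist x c)\<^sup>2" using r_le[OF c(1)] r0[of n] by (intro power_mono) auto
    have an: "dist x (p n) \<le> L + e n" using p(2)[of n] L(2)[of n] by linarith
    have am: "dist x (p m) \<le> L + e n"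
    proof -
      have "e m \<le> e n" unfolding e_def using nm by (auto simp: field_simps)
      then show ?thesis using p(2)[of m] L(2)[of m] by linarith
    qed
    have h3: "(dist (p n) x)\<^sup>2 \<le> (L + e n)\<^sup>2" using an by (intro power_mono) (auto simp: dist_commute)
    have h4: "(dist (p m) x)\<^sup>2 \<le> (L + e n)\<^sup>2" using am by (intro power_mono) (auto simp: dist_commute)
    have h5: "(r n)\<^sup>2 \<ge> L * L - 2 * (L * (L - r n))"
    proof -
      have "(r n)\<^sup>2 = L * L - 2 * (L * (L - r n)) + (L - r n)\<^sup>2"
        by (simp add: power2_eq_square algebra_simps)
      then show ?thesis by simp
    qed
    have h6: "(L + e n)\<^sup>2 \<le> L * L + 2 * (L * e n) + e n"
    proof -
      have "e n * e n \<le> e n * 1" using e[of n] by (intro mult_left_mono) auto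
      moreover have "(L + e n)\<^sup>2 = L * L + 2 * (L * e n) + e n * e n"
        by (simp add: power2_eq_square algebra_simps)
      ultimately show ?thesis by simp
    qed
    have "D\<^sup>2 \<le> 8 * (L * e n) + 4 * e n + 8 * (L * (L - r n))"
      by (rule aux_lin[OF h1 h2 h3 h4 h5 h6])
    then show ?thesis unfolding D_def b_def .
  qed
  have "e \<longlonglongrightarrow> 0" unfolding e_def using LIMSEQ_inverse_real_of_nat .
  then have "b \<longlonglongrightarrow> 8 * (L * 0) + 4 * 0 + 8 * (L * (L - L))"
    unfolding b_def by (intro tendsto_intros L(1))
  then have b0: "b \<longlonglongrightarrow> 0" by simp
  have "Cauchy p"
  proof (rule metric_CauchyI)
    fix \<epsilon> :: real assume "\<epsilon> > 0"
    then have "\<epsilon>\<^sup>2 > 0" by simp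
    from order_tendstoD(2)[OF b0 this] obtain N where N: "\<And>n. n \<ge> N \<Longrightarrow> b n < \<epsilon>\<^sup>2"
      unfolding eventually_sequentially by blast
    show "\<exists>M. \<forall>m\<ge>M. \<forall>n\<ge>M. dist (p m) (p n) < \<epsilon>"
    proof (intro exI allI impI)
      fix m n assume mn: "m \<ge> N" "n \<ge> N"
      have "(dist (p m) (p n))\<^sup>2 < \<epsilon>\<^sup>2"
      proof (cases "m \<le> n")
        case True then show ?thesis using key[OF True] N[OF mn(1)] by linarith
      next
        case False then show ?thesis using key[of n m] N[OF mn(2)] by (simp add: dist_commute)
      qed
      then show "dist (p m) (p n) < \<epsilon>" using \<open>\<epsilon> > 0\<close> by (rule power2_less_imp_less[OF _ less_imp_le])
    qed
  qed
  then show ?thesis using p unfolding r_def e_def by (auto intro: less_imp_le)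
qed

lemma projection:
  fixes C :: "'q::complete_space set"
  assumes had: "hadamard TYPE('q)"
    and C: "closed C" "geod_convex_set C" "C \<noteq> {}" and q: "q \<notin> C"
  shows "\<exists>\<pi>\<in>C. \<forall>y\<in>C. dist y \<pi> < dist y q"
proof -
  obtain c0 where c0: "c0 \<in> C" using C(3) by blast
  obtain p where p: "\<And>n. p n \<in> C" "Cauchy p"
    "\<And>n. dist q (p n) \<le> Inf (dist q ` C) + inverse (real (Suc n))"
    using nested_cauchy[OF had, of "\<lambda>_. C" q "dist q c0"] convex_set_mid[OF had C(2)] C(3) c0
    by blast
  obtain \<pi> where pl: "p \<longlonglongrightarrow> \<pi>" using p(2) Cauchy_convergent_iff convergent_def by blast
  have \<pi>C: "\<pi> \<in> C" using C(1) p(1) pl unfolding closed_sequential_limits by blast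
  define \<delta> where "\<delta> = Inf (dist q ` C)"
  have bdd: "bdd_below (dist q ` C)" by (auto intro: bdd_belowI[of _ 0])
  have \<delta>le: "\<delta> \<le> dist q z" if "z \<in> C" for z
    unfolding \<delta>_def by (rule cInf_lower) (use that bdd in auto)
  have "dist q \<pi> \<le> \<delta>"
  proof (rule LIMSEQ_le)
    show "(\<lambda>n. dist q (p n)) \<longlonglongrightarrow> dist q \<pi>" by (intro tendsto_intros pl)
    show "(\<lambda>n. \<delta> + inverse (real (Suc n))) \<longlonglongrightarrow> \<delta>" by (rule LIMSEQ_inverse_real_of_nat_add)
    show "\<exists>N. \<forall>n\<ge>N. dist q (p n) \<le> \<delta> + inverse (real (Suc n))" using p(3) unfolding \<delta>_def by blast
  qed
  then have d\<pi>: "dist q \<pi> = \<delta>" using \<delta>le[OF \<pi>C] by simp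
  have "q \<noteq> \<pi>" using q \<pi>C by auto
  then have "dist q \<pi> > 0" by simp
  then have \<delta>pos: "\<delta> > 0" using d\<pi> by simp
  have "\<forall>y\<in>C. dist y \<pi> < dist y q"
  proof
    fix y assume yC: "y \<in> C"
    show "dist y \<pi> < dist y q"
    proof (cases "y = \<pi>")
      case True then show ?thesis using \<delta>pos d\<pi> by (simp add: dist_commute)
    next
      case False
      define D where "D = dist \<pi> y"
      have D: "D > 0" using False unfolding D_def by simp
      obtain \<gamma> where g: "geodesic_between \<pi> y \<gamma>" using geodesic_exists[OF had, of \<pi> y] by blast
      have ny: "\<pi> \<noteq> y" using False by auto
      have gC: "\<gamma> ` {0..D} \<subseteq> C" unfolding D_def
        using C(2)[unfolded geod_convex_set_def, rule_format, OF \<pi>C yC ny g] .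
      have gd: "\<And>a b. a \<in> {0..D} \<Longrightarrow> b \<in> {0..D} \<Longrightarrow> dist (\<gamma> a) (\<gamma> b) = \<bar>a - b\<bar>"
        using g unfolding geodesic_between_def D_def by blast
      have g0: "\<gamma> 0 = \<pi>" "\<gamma> D = y" using g unfolding geodesic_between_def D_def by auto
      define \<phi> where "\<phi> t = (dist q (\<gamma> t))\<^sup>2 - t\<^sup>2" for t
      have "convex_on {0..D} \<phi>"
      proof (rule midpoint_convex)
        show "continuous_on {0..D} \<phi>" unfolding \<phi>_def
          by (intro continuous_intros continuous_on_compose2[OF continuous_on_dist[OF continuous_on_const continuous_on_id]]
             geodesic_cont[OF g, unfolded D_def[symmetric]]) auto
        fix s u assume su: "s \<in> {0..D}" "u \<in> {0..D}"
        have m1: "dist (\<gamma> s) (\<gamma> ((s+u)/2)) = dist (\<gamma> s) (\<gamma> u) / 2"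
          and m2: "dist (\<gamma> u) (\<gamma> ((s+u)/2)) = dist (\<gamma> s) (\<gamma> u) / 2"
          using geodesic_mid[OF g, of s u] su unfolding D_def by auto
        have "(dist q (\<gamma> ((s+u)/2)))\<^sup>2 \<le> (1/2) * (dist (\<gamma> s) q)\<^sup>2 + (1/2) * (dist (\<gamma> u) q)\<^sup>2 - (1/4) * (dist (\<gamma> s) (\<gamma> u))\<^sup>2"
          by (rule mid_ineq[OF had m1 m2])
        also have "(dist (\<gamma> s) (\<gamma> u))\<^sup>2 = (s - u)\<^sup>2" using gd[OF su] by simp
        finally have "(dist q (\<gamma> ((s+u)/2)))\<^sup>2 \<le> (1/2) * (dist q (\<gamma> s))\<^sup>2 + (1/2) * (dist q (\<gamma> u))\<^sup>2 - (1/4) * (s - u)\<^sup>2"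
          by (simp add: dist_commute)
        moreover have "(1/4) * (s - u)\<^sup>2 + ((s+u)/2)\<^sup>2 = (1/2) * s\<^sup>2 + (1/2) * u\<^sup>2"
          by (simp add: power2_eq_square field_simps)
        ultimately show "\<phi> ((s+u)/2) \<le> (\<phi> s + \<phi> u)/2" unfolding \<phi>_def by simp
      qed
      show ?thesis
      proof (rule ccontr)
        assume "\<not> dist y \<pi> < dist y q"
        then have yq: "dist q y \<le> D" unfolding D_def by (simp add: dist_commute)
        have \<delta>D: "\<delta> \<le> D" using \<delta>le[OF yC] yq by simp
        define lam where "lam = \<delta>\<^sup>2 / (2 * D\<^sup>2)"
        have "\<delta>\<^sup>2 \<le> D\<^sup>2" using \<delta>D \<delta>pos by (intro power_mono) auto
        then have "\<delta>\<^sup>2 \<le> 2 * D\<^sup>2" using zero_le_power2[of D] by linarith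
        then have lam: "0 < lam" "lam \<le> 1" unfolding lam_def using \<delta>pos D
          by (auto simp: divide_le_eq)
        have "\<phi> ((1 - lam) *\<^sub>R 0 + lam *\<^sub>R D) \<le> (1 - lam) * \<phi> 0 + lam * \<phi> D"
          by (rule convex_onD[OF \<open>convex_on {0..D} \<phi>\<close>]) (use lam D in auto)
        then have ineq: "(dist q (\<gamma> (lam * D)))\<^sup>2 - (lam * D)\<^sup>2 \<le> (1 - lam) * \<delta>\<^sup>2 + lam * ((dist q y)\<^sup>2 - D\<^sup>2)"
          unfolding \<phi>_def using g0 d\<pi> by simp
        have "lam * D \<in> {0..D}" using lam D by (auto simp: mult_le_cancel_right1)
        then have "\<delta> \<le> dist q (\<gamma> (lam * D))" using gC by (intro \<delta>le) auto
        then have "\<delta>\<^sup>2 \<le> (dist q (\<gamma> (lam * D)))\<^sup>2" using \<delta>pos by (intro power_mono) auto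
        moreover have "(dist q y)\<^sup>2 \<le> D\<^sup>2" using yq by (intro power_mono) auto
        then have "lam * ((dist q y)\<^sup>2 - D\<^sup>2) \<le> 0" using lam by (intro mult_nonneg_nonpos) auto
        ultimately have "\<delta>\<^sup>2 - (lam * D)\<^sup>2 \<le> (1 - lam) * \<delta>\<^sup>2"
          by (rule aux_lin2[OF ineq])
        then have "lam * \<delta>\<^sup>2 \<le> lam * (lam * D\<^sup>2)" by (simp add: power2_eq_square algebra_simps)
        then have "\<delta>\<^sup>2 \<le> lam * D\<^sup>2" using lam by simp
        also have "lam * D\<^sup>2 = \<delta>\<^sup>2 / 2" unfolding lam_def using D by (simp add: field_simps)
        finally show False using \<delta>pos by simp
      qed
    qed
  qed
  then show ?thesis using \<pi>C by blast
qed




context setting begin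

lemma exists_min: "\<exists>p. \<forall>q. v p \<le> v q"
proof -
  obtain R0 where R0: "R0 \<ge> 0" "\<And>q. dist x0 q \<ge> R0 \<Longrightarrow> v q \<ge> 2" using coercive by blast
  have lb: "v q \<ge> - EH * R0" for q
  proof (cases "dist x0 q \<ge> R0")
    case True
    have "EH * R0 \<ge> 0" using EH_nonneg R0 by simp
    then show ?thesis using R0(2)[OF True] by linarith
  next
    case False
    have "EH * dist x0 q \<le> EH * R0" using False EH_nonneg by (intro mult_left_mono) auto
    then show ?thesis using v_lower[of q] by linarith
  qed
  define I where "I = Inf (range v)"
  have bdd: "bdd_below (range v)" using lb by (auto intro: bdd_belowI[of _ "- EH * R0"])
  have I_le: "I \<le> v q" for q unfolding I_def by (rule cInf_lower) (use bdd in auto)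
  define e where "e n = inverse (real (Suc n))" for n
  have e: "0 < e n" "e n \<le> 1" for n unfolding e_def by (auto simp: field_simps)
  define S where "S n = {q. v q \<le> I + e n}" for n
  have ne: "S n \<noteq> {}" for n
  proof -
    have "Inf (range v) < I + e n" using e[of n] unfolding I_def by simp
    then obtain q where "v q < I + e n" using cInf_less_iff[OF _ bdd] by auto
    then show ?thesis unfolding S_def by (auto intro: less_imp_le)
  qed
  have dec: "S (Suc n) \<subseteq> S n" for n
  proof -
    have "e (Suc n) \<le> e n" unfolding e_def by (auto simp: field_simps)
    then show ?thesis unfolding S_def by auto
  qed
  have mid: "\<exists>c\<in>S n. dist a c = dist a b / 2 \<and> dist b c = dist a b / 2" if "a \<in> S n" "b \<in> S n" for n a b
  proof -
    obtain m where m: "dist a m = dist a b / 2" "dist b m = dist a b / 2"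
      using had_mid[OF had, of a b] by blast
    have "v m \<le> (v a + v b) / 2" by (rule v_mid[OF m])
    then have "m \<in> S n" using that unfolding S_def by auto
    then show ?thesis using m by blast
  qed
  have bnd: "\<exists>z\<in>S n. dist x0 z \<le> R0" for n
  proof -
    obtain z where z: "z \<in> S n" using ne[of n] by blast
    have "I \<le> 0" using I_le[of x0] v_x0 by simp
    then have "v z < 2" using z e[of n] unfolding S_def by auto
    then have "dist x0 z \<le> R0" using R0(2)[of z] by linarith
    then show ?thesis using z by blast
  qed
  obtain p where p: "\<And>n. p n \<in> S n" "Cauchy p"
    using nested_cauchy[OF had, of S x0 R0] dec ne mid bnd by blast
  obtain ps where pl: "p \<longlonglongrightarrow> ps" using p(2) Cauchy_convergent_iff convergent_def by blast
  have "isCont v ps" using v_cont continuous_on_eq_continuous_at[of UNIV v] by simp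
  then have vl: "(\<lambda>n. v (p n)) \<longlonglongrightarrow> v ps" by (rule isCont_tendsto_compose[OF _ pl])
  have "v ps \<le> I"
  proof (rule LIMSEQ_le[OF vl])
    show "(\<lambda>n. I + inverse (real (Suc n))) \<longlonglongrightarrow> I" by (rule LIMSEQ_inverse_real_of_nat_add)
    show "\<exists>N. \<forall>n\<ge>N. v (p n) \<le> I + inverse (real (Suc n))" using p(1) unfolding S_def e_def by auto
  qed
  then show ?thesis using I_le by (blast intro: order_trans)
qed

lemma part1: "geod_convex_fun v"
  unfolding geod_convex_fun_def
proof (intro allI impI)
  fix q p :: 'q and \<gamma> assume "q \<noteq> p" and g: "geodesic_between q p \<gamma>"
  show "convex_on {0..dist q p} (v \<circ> \<gamma>)"
  proof (rule midpoint_convex)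
    show "continuous_on {0..dist q p} (v \<circ> \<gamma>)"
      by (rule continuous_on_compose[OF geodesic_cont[OF g] continuous_on_subset[OF v_cont]]) simp
    fix s u assume su: "s \<in> {0..dist q p}" "u \<in> {0..dist q p}"
    show "(v \<circ> \<gamma>) ((s + u) / 2) \<le> ((v \<circ> \<gamma>) s + (v \<circ> \<gamma>) u) / 2"
      using v_mid[OF geodesic_mid[OF g su]] by simp
  qed
qed

lemma v_shift: "var_fun P Y \<tau> x1 q = v q - v x1"
proof -
  have "v q - v x1 = (\<integral>\<omega>. \<tau> (dist (Y \<omega>) q) - \<tau> (dist (Y \<omega>) x1) \<partial>P)" by (rule v_diff)
  then show ?thesis unfolding var_fun_def by simp
qed

lemma fm_eq: "frechet_means P Y \<tau> x0 = {q. \<forall>q'. v q \<le> v q'}"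
  unfolding frechet_means_def ..

lemma part2:
  "frechet_means P Y \<tau> x0 \<noteq> {} \<and> closed (frechet_means P Y \<tau> x0)
      \<and> bounded (frechet_means P Y \<tau> x0) \<and> geod_convex_set (frechet_means P Y \<tau> x0)
      \<and> (\<forall>x0'. frechet_means P Y \<tau> x0' = frechet_means P Y \<tau> x0)"
proof (intro conjI allI)
  show "frechet_means P Y \<tau> x0 \<noteq> {}" unfolding fm_eq using exists_min by blast
  show "closed (frechet_means P Y \<tau> x0)" unfolding fm_eq
    by (intro closed_Collect_all closed_Collect_le v_cont continuous_on_const)
  obtain R0 where R0: "R0 \<ge> 0" "\<And>q. dist x0 q \<ge> R0 \<Longrightarrow> v q \<ge> 2" using coercive by blast
  have "frechet_means P Y \<tau> x0 \<subseteq> cball x0 R0"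
  proof
    fix q assume "q \<in> frechet_means P Y \<tau> x0"
    then have "v q \<le> v x0" unfolding fm_eq by auto
    then have "v q < 2" using v_x0 by simp
    have "dist x0 q < R0"
    proof (rule ccontr)
      assume "\<not> dist x0 q < R0"
      then have "R0 \<le> dist x0 q" by simp
      then show False using R0(2)[of q] \<open>v q < 2\<close> by simp
    qed
    then show "q \<in> cball x0 R0" by simp
  qed
  then show "bounded (frechet_means P Y \<tau> x0)" using bounded_cball bounded_subset by blast
  show "geod_convex_set (frechet_means P Y \<tau> x0)"
    unfolding geod_convex_set_def
  proof (intro ballI impI allI subsetI)
    fix q p :: 'q and \<gamma> z assume qM: "q \<in> frechet_means P Y \<tau> x0" and pM: "p \<in> frechet_means P Y \<tau> x0"
      and "q \<noteq> p" and g: "geodesic_between q p \<gamma>" and z: "z \<in> \<gamma> ` {0..dist q p}"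
    then obtain t where t: "t \<in> {0..dist q p}" "z = \<gamma> t" by blast
    define D where "D = dist q p"
    have D: "D > 0" using \<open>q \<noteq> p\<close> unfolding D_def by simp
    have cv: "convex_on {0..D} (v \<circ> \<gamma>)" using part1 \<open>q \<noteq> p\<close> g unfolding geod_convex_fun_def D_def by blast
    have g0: "\<gamma> 0 = q" "\<gamma> D = p" using g unfolding geodesic_between_def D_def by auto
    define lam where "lam = t / D"
    have lam: "0 \<le> lam" "lam \<le> 1" using t D unfolding lam_def D_def by auto
    have "(v \<circ> \<gamma>) ((1 - lam) *\<^sub>R 0 + lam *\<^sub>R D) \<le> (1 - lam) * (v \<circ> \<gamma>) 0 + lam * (v \<circ> \<gamma>) D"
      by (rule convex_onD[OF cv]) (use lam D in auto)
    moreover have "(1 - lam) *\<^sub>R 0 + lam *\<^sub>R D = t" unfolding lam_def using D by simp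
    ultimately have vz: "v z \<le> (1 - lam) * v q + lam * v p" using t g0 by simp
    have "v q \<le> v p" "v p \<le> v q" using qM pM unfolding fm_eq by auto
    then have "(1 - lam) * v q + lam * v p = v q" by (simp add: algebra_simps)
    then have "v z \<le> v q" using vz by simp
    then show "z \<in> frechet_means P Y \<tau> x0" using qM unfolding fm_eq by (auto intro: order_trans)
  qed
  fix x1
  have e: "(var_fun P Y \<tau> x1 q \<le> var_fun P Y \<tau> x1 q') \<longleftrightarrow> (v q \<le> v q')" for q q'
  proof -
    have "var_fun P Y \<tau> x1 q = v q - v x1" "var_fun P Y \<tau> x1 q' = v q' - v x1" by (rule v_shift)+
    then show ?thesis by auto
  qed
  show "frechet_means P Y \<tau> x1 = frechet_means P Y \<tau> x0"
    unfolding frechet_means_def using e by simp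
qed

lemma part3:
  assumes C: "closed C" "geod_convex_set C" and m: "measure P {\<omega> \<in> space P. Y \<omega> \<in> C} = 1"
  shows "frechet_means P Y \<tau> x0 \<subseteq> C"
proof
  fix q assume qM: "q \<in> frechet_means P Y \<tau> x0"
  show "q \<in> C"
  proof (rule ccontr)
    assume qC: "q \<notin> C"
    have "C \<noteq> {}" using m by auto
    obtain \<pi> where \<pi>: "\<pi> \<in> C" "\<And>y. y \<in> C \<Longrightarrow> dist y \<pi> < dist y q"
      using projection[OF had C \<open>C \<noteq> {}\<close> qC] by blast
    have "AE \<omega> in P. \<omega> \<in> {\<omega> \<in> space P. Y \<omega> \<in> C}" by (rule AE_prob_1[OF m])
    then have ae: "AE \<omega> in P. Y \<omega> \<in> C" by auto
    have "(\<integral>\<omega>. \<tau> (dist (Y \<omega>) \<pi>) - \<tau> (dist (Y \<omega>) x0) \<partial>P) < (\<integral>\<omega>. \<tau> (dist (Y \<omega>) q) - \<tau> (dist (Y \<omega>) x0) \<partial>P)"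
    proof (rule integral_less_AE_space[OF f_int f_int])
      show "AE \<omega> in P. \<tau> (dist (Y \<omega>) \<pi>) - \<tau> (dist (Y \<omega>) x0) < \<tau> (dist (Y \<omega>) q) - \<tau> (dist (Y \<omega>) x0)"
        using ae
      proof eventually_elim
        case (elim \<omega>)
        then show ?case using tau_strict[OF tau, of "dist (Y \<omega>) \<pi>" "dist (Y \<omega>) q"] \<pi>(2)[of "Y \<omega>"] by simp
      qed
      show "emeasure P (space P) \<noteq> 0" using emeasure_space_1 by simp
    qed
    then have "v \<pi> < v q" unfolding var_fun_def .
    moreover have "v q \<le> v \<pi>" using qM unfolding fm_eq by auto
    ultimately show False by simp
  qed
qed

end

theorem mainTheorem6:
  fixes P :: "'w measure" and Y :: "'w \<Rightarrow> 'q::complete_space"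
    and x0 :: 'q and \<tau> :: "real \<Rightarrow> real"
  assumes "prob_space P"
    and "hadamard TYPE('q)"
    and "Y \<in> measurable P borel"
    and "\<tau> \<in> S0plus"
    and "(\<integral>\<^sup>+ \<omega>. ennreal (tau_deriv \<tau> (dist (Y \<omega>) x0)) \<partial>P) < \<infinity>"
  shows "((\<forall>q. integrable P (\<lambda>\<omega>. \<tau> (dist (Y \<omega>) q) - \<tau> (dist (Y \<omega>) x0)))
      \<and> geod_convex_fun (var_fun P Y \<tau> x0))
    \<and> (frechet_means P Y \<tau> x0 \<noteq> {} \<and> closed (frechet_means P Y \<tau> x0)
      \<and> bounded (frechet_means P Y \<tau> x0) \<and> geod_convex_set (frechet_means P Y \<tau> x0)
      \<and> (\<forall>x0'. frechet_means P Y \<tau> x0' = frechet_means P Y \<tau> x0))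
    \<and> (\<forall>C. closed C \<longrightarrow> geod_convex_set C \<longrightarrow>
      measure P {\<omega> \<in> space P. Y \<omega> \<in> C} = 1 \<longrightarrow> frechet_means P Y \<tau> x0 \<subseteq> C)"
proof -
  interpret setting P Y x0 \<tau>
    using assms by (simp add: setting_def setting_axioms_def)
  show ?thesis using f_int part1 part2 part3 by blast
qed

end
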